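(* Let $p>155$ be a prime, let $G$ be a cyclic group of order $p$, and let $S$ be an unsplittable minimal zero-sum sequence over $G$ of length $|S|=\frac{p-1}{2}$. Then there do not exist $g\in G$ and integers $r_1\ge r_2\ge r_3>0$ such that $S=g^{r_1}\big(\frac{p-1}{2}g\big)^{r_2}\big(\frac{p+3}{2}g\big)^{r_3}$.
   Context: A sequence over $G$ is a finite unordered list of elements of $G$ with repetition allowed, written multiplicatively; $h^r$ denotes $r$ copies of $h$ and $tg$ is the $t$-fold multiple of $g$. $|S|$ is the length, $\sigma(S)$ the sum of terms, and $\operatorname{supp}(S)$ the set of distinct elements occurring. $S$ is a minimal zero-sum sequence if $\sigma(S)=0$ and no subsequence $U$ with $1\le|U|<|S|$ has $\sigma(U)=0$. A minimal zero-sum sequence $S$ is unsplittable if there do not exist $h\in\operatorname{supp}(S)$ and $y,z\in G$ with $y+z=h$ such that the sequence obtained from $S$ by replacing one copy of $h$ with the two terms $y,z$ is again a minimal zero-sum sequence. *)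

theory Defs
  imports Main "HOL-Library.Multiset" "HOL-Computational_Algebra.Primes"
begin

primrec nmult :: "nat \<Rightarrow> 'a::monoid_add \<Rightarrow> 'a" where
  "nmult 0 g = 0"
| "nmult (Suc n) g = g + nmult n g"

definition cyclic_group :: "'a::ab_group_add itself \<Rightarrow> bool" where
  "cyclic_group _ \<longleftrightarrow> (\<exists>g::'a. \<forall>x::'a. \<exists>n. x = nmult n g)"

definition minimal_zero_sum :: "'a::ab_group_add multiset \<Rightarrow> bool" where
  "minimal_zero_sum S \<longleftrightarrow> sum_mset S = 0 \<and>
     \<not> (\<exists>U. U \<subseteq># S \<and> 1 \<le> size U \<and> size U < size S \<and> sum_mset U = 0)"

definition unsplittable :: "'a::ab_group_add multiset \<Rightarrow> bool" where
  "unsplittable S \<longleftrightarrow> minimal_zero_sum S \<and>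
     \<not> (\<exists>h y z. h \<in># S \<and> y + z = h \<and> minimal_zero_sum (S - {#h#} + {#y, z#}))"

end

theory Submission
  imports Defs
begin

lemma nmult_add: "nmult (m + n) g = nmult m g + nmult n g"
  by (induction m) (auto simp: add.assoc)

lemma nmult_mult: "nmult (a * b) g = nmult a (nmult b g)"
  by (induction a) (auto simp: nmult_add)

lemma nmult_zero: "nmult n (0::'a::monoid_add) = 0"
  by (induction n) auto

lemma sum_rep: "sum_mset (replicate_mset r x) = nmult r x"
  by (induction r) auto

lemma nmult_mod:
  assumes "nmult d (a::'a::ab_group_add) = 0"
  shows "nmult n a = nmult (n mod d) a"
proof -
  have "nmult n a = nmult (d * (n div d) + n mod d) a" by simp
  also have "\<dots> = nmult (n mod d) a"
    by (simp only: nmult_add) (simp add: mult.commute[of d] nmult_mult assms nmult_zero)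
  finally show ?thesis .
qed

lemma gen_order:
  fixes a :: "'a::ab_group_add"
  assumes card: "card (UNIV :: 'a set) = p" and p: "p > 0"
    and gen: "\<forall>x::'a. \<exists>n. x = nmult n a"
  shows "nmult p a = 0"
proof -
  have fin: "finite (UNIV :: 'a set)" using card p card.infinite by fastforce
  have "\<not> inj_on (\<lambda>k. nmult k a) {0..p}"
  proof
    assume "inj_on (\<lambda>k. nmult k a) {0..p}"
    then have "card ((\<lambda>k. nmult k a) ` {0..p}) = p + 1" by (simp add: card_image)
    moreover have "card ((\<lambda>k. nmult k a) ` {0..p}) \<le> p"
      using card card_mono[OF fin] by fastforce
    ultimately show False by simp
  qed
  then obtain i j where ij: "i \<le> p" "j \<le> p" "i \<noteq> j" "nmult i a = nmult j a"
    unfolding inj_on_def by auto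
  then obtain i j where ij: "i < j" "j \<le> p" "nmult i a = nmult j a"
    by (metis linorder_neqE_nat)
  define d where "d = j - i"
  have "j = d + i" using ij by (simp add: d_def)
  then have "nmult j a = nmult d a + nmult i a" by (simp only: nmult_add)
  then have d0: "nmult d a = 0" using ij by simp
  have dpos: "d > 0" "d \<le> p" using ij by (auto simp: d_def)
  have "UNIV \<subseteq> (\<lambda>k. nmult k a) ` {0..<d}"
  proof
    fix x :: 'a
    obtain n where "x = nmult n a" using gen by blast
    then have "x = nmult (n mod d) a" using nmult_mod[OF d0] by simp
    moreover have "n mod d \<in> {0..<d}" using dpos by simp
    ultimately show "x \<in> (\<lambda>k. nmult k a) ` {0..<d}" by blast
  qed
  then have "p \<le> card ((\<lambda>k. nmult k a) ` {0..<d})"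
    using card card_mono by (metis finite_atLeastLessThan finite_imageI)
  also have "\<dots> \<le> d" using card_image_le by (metis card_atLeastLessThan diff_zero finite_atLeastLessThan)
  finally have "d = p" using dpos by simp
  then show ?thesis using d0 by simp
qed

theorem lemma3p4:
  fixes S :: "'a::ab_group_add multiset" and p :: nat
  assumes "prime p" and "p > 155"
    and "card (UNIV :: 'a set) = p" and "cyclic_group TYPE('a)"
    and "unsplittable S" and "size S = (p - 1) div 2"
  shows "\<not> (\<exists>(g::'a) (r1::nat) r2 r3. r1 \<ge> r2 \<and> r2 \<ge> r3 \<and> r3 > 0 \<and>
            S = replicate_mset r1 g + replicate_mset r2 (nmult ((p - 1) div 2) g)
                + replicate_mset r3 (nmult ((p + 3) div 2) g))"
proof
  assume "\<exists>(g::'a) (r1::nat) r2 r3. r1 \<ge> r2 \<and> r2 \<ge> r3 \<and> r3 > 0 \<and>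
            S = replicate_mset r1 g + replicate_mset r2 (nmult ((p - 1) div 2) g)
                + replicate_mset r3 (nmult ((p + 3) div 2) g)"
  then obtain g r1 r2 r3 where r: "r1 \<ge> r2" "r2 \<ge> r3" "r3 > 0"
    and S: "S = replicate_mset r1 g + replicate_mset r2 (nmult ((p - 1) div 2) g)
                + replicate_mset r3 (nmult ((p + 3) div 2) g)" by blast
  define n where "n = (p - 1) div 2"
  have odd: "odd p" using assms(1,2) prime_odd_nat by auto
  then have pn: "p = 2 * n + 1" unfolding n_def by presburger
  have n3: "(p + 3) div 2 = n + 2" using pn by simp
  have sz: "r1 + r2 + r3 = n" using assms(6) S by (simp add: n_def)
  have mz: "minimal_zero_sum S" using assms(5) unfolding unsplittable_def by simp
  define m where "m = r1 + r2 * n + r3 * (n + 2)"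
  have sumS: "sum_mset S = nmult m g"
  proof -
    have "sum_mset S = nmult r1 g + nmult r2 (nmult n g) + nmult r3 (nmult (n+2) g)"
      by (simp add: S sum_rep n3 n_def)
    also have "\<dots> = nmult m g" unfolding m_def by (simp only: nmult_add nmult_mult)
    finally show ?thesis .
  qed
  then have mg: "nmult m g = 0" using mz unfolding minimal_zero_sum_def by simp
  show False
  proof (cases "g = 0")
    case True
    have h1: "{#0#} \<subseteq># S" using S True r by (simp add: nmult_zero)
    have h2: "size S > 1" using assms(2,6) by simp
    have h3: "sum_mset {#0::'a#} = 0" "size {#0::'a#} = 1" by simp_all
    show False using mz h1 h2 h3 unfolding minimal_zero_sum_def by (metis order_refl)
  next
    case False
    obtain a :: 'a where gen: "\<forall>x::'a. \<exists>n. x = nmult n a"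
      using assms(4) unfolding cyclic_group_def by blast
    have pa: "nmult p a = 0" using gen_order[OF assms(3) _ gen] assms(2) by simp
    have pg: "nmult p g = 0"
    proof -
      obtain k where "g = nmult k a" using gen by blast
      then show ?thesis
        by (metis mult.commute nmult_mult nmult_zero pa)
    qed
    define t where "t = p - 1 + r3 - 3 * r2"
    have tb: "0 < t" "t < p" using r sz pn by (auto simp: t_def)
    have "int (2 * m) = int t + int p * int (r2 + r3)"
      using r sz pn by (simp add: m_def t_def algebra_simps of_nat_diff)
    then have eq: "2 * m = t + p * (r2 + r3)" by (metis of_nat_add of_nat_mult of_nat_eq_iff)
    have "\<not> p dvd m"
    proof
      assume "p dvd m"
      then have "p dvd 2 * m" by simp
      then have "p dvd t" using eq by (simp add: dvd_add_left_iff)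
      then show False using tb by (simp add: nat_dvd_not_less)
    qed
    then have cop: "coprime p m" using assms(1) prime_imp_coprime by blast
    have m0: "m \<noteq> 0" using r by (simp add: m_def)
    obtain x y where xy: "m * x = p * y + gcd m p" using bezout_nat[OF m0] by blast
    then have xy: "m * x = p * y + 1" using cop by (simp add: coprime_iff_gcd_eq_1 gcd.commute)
    have "nmult (m * x) g = 0" by (metis mult.commute nmult_mult nmult_zero mg)
    moreover have "nmult (p * y + 1) g = g"
      by (simp add: nmult_add mult.commute[of p] nmult_mult pg nmult_zero)
    ultimately show False using xy False by simp
  qed
qed

end
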